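(* For every closed convex cone $K$ in a finite-dimensional real Euclidean space $\mathbb{E}$, the tangential depth of $K$ is at most $\dim K$.
   Context: For a closed convex set $C$ and $x\in C$, $\mathcal{T}(x;C)=\operatorname{cl}\{d: x+\epsilon d\in C\text{ for some }\epsilon>0\}$ is the tangent cone. For a family $\mathcal{K}$ of closed convex sets, $\mathcal{T}(\mathcal{K})$ denotes the set of all tangent cones $\mathcal{T}(x;C)$ with $C\in\mathcal{K}$ and $x\in C$. Set $\mathcal{T}^0(\mathcal{K})=\mathcal{K}$ and $\mathcal{T}^k(\mathcal{K})=\mathcal{T}(\mathcal{T}^{k-1}(\mathcal{K}))$ for $k\ge 1$; for a single set $C$ write $\mathcal{T}^k(C)$ for $\mathcal{T}^k(\{C\})$. The tangential depth of a closed convex set $C$ is the smallest nonnegative integer $k$ such that $\mathcal{T}^{k+1}(C)=\mathcal{T}^k(C)$. *)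

theory Defs
  imports "HOL-Analysis.Analysis"
begin

definition tangent_cone :: "'a::euclidean_space \<Rightarrow> 'a set \<Rightarrow> 'a set" where
  "tangent_cone x C = closure {d. \<exists>\<epsilon>>0. x + \<epsilon> *\<^sub>R d \<in> C}"

definition tangent_family :: "'a::euclidean_space set set \<Rightarrow> 'a set set" where
  "tangent_family \<K> = {tangent_cone x C | C x. C \<in> \<K> \<and> x \<in> C}"

definition tangent_iter :: "nat \<Rightarrow> 'a::euclidean_space set set \<Rightarrow> 'a set set" where
  "tangent_iter k \<K> = (tangent_family ^^ k) \<K>"

definition tangential_depth :: "'a::euclidean_space set \<Rightarrow> nat" where
  "tangential_depth C = (LEAST k. tangent_iter (Suc k) {C} = tangent_iter k {C})"

end

theory Submission
  imports Defs
begin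

definition lin :: "'a::euclidean_space set \<Rightarrow> 'a set" where
  "lin C = {x. x \<in> C \<and> - x \<in> C}"

lemma cc_add: "convex C \<Longrightarrow> cone C \<Longrightarrow> x \<in> C \<Longrightarrow> y \<in> C \<Longrightarrow> x + y \<in> C"
  using convex_cone by blast

lemma cc_scale: "cone C \<Longrightarrow> x \<in> C \<Longrightarrow> c \<ge> 0 \<Longrightarrow> c *\<^sub>R x \<in> C"
  by (simp add: cone_def)

lemma lin_subspace:
  assumes "convex C" "cone C" "x \<in> C"
  shows "subspace (lin C)"
  unfolding subspace_def
proof (intro conjI ballI allI)
  have "0 \<in> C" using cc_scale[OF assms(2,3), of 0] by simp
  then show "0 \<in> lin C" by (simp add: lin_def)
next
  fix a b assume "a \<in> lin C" "b \<in> lin C"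
  then show "a + b \<in> lin C"
  proof -
    have "a \<in> C" "-a \<in> C" "b \<in> C" "-b \<in> C" using \<open>a \<in> lin C\<close> \<open>b \<in> lin C\<close> by (auto simp: lin_def)
    then have "a + b \<in> C" "(-a) + (-b) \<in> C" using cc_add[OF assms(1,2)] by blast+
    then show ?thesis by (simp add: lin_def)
  qed
next
  fix c :: real and a assume a: "a \<in> lin C"
  then have a1: "a \<in> C" and a2: "-a \<in> C" by (auto simp: lin_def)
  show "c *\<^sub>R a \<in> lin C"
  proof (cases "c \<ge> 0")
    case True
    have "c *\<^sub>R a \<in> C" using cc_scale[OF assms(2) a1 True] .
    moreover have "c *\<^sub>R (-a) \<in> C" using cc_scale[OF assms(2) a2 True] .
    ultimately show ?thesis by (simp add: lin_def)
  next
    case False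
    then have nc: "-c \<ge> 0" by simp
    have "(-c) *\<^sub>R (-a) \<in> C" using cc_scale[OF assms(2) a2 nc] .
    moreover have "(-c) *\<^sub>R a \<in> C" using cc_scale[OF assms(2) a1 nc] .
    ultimately show ?thesis by (simp add: lin_def)
  qed
qed

definition pre :: "'a::euclidean_space \<Rightarrow> 'a set \<Rightarrow> 'a set" where
  "pre x C = {d. \<exists>\<epsilon>>0. x + \<epsilon> *\<^sub>R d \<in> C}"

lemma pre_smaller:
  assumes "convex C" "cone C" "x \<in> C" "x + e *\<^sub>R d \<in> C" "0 < e'" "e' \<le> e"
  shows "x + e' *\<^sub>R d \<in> C"
proof -
  define t where "t = e / e'"
  have t1: "t \<ge> 1" using assms(5,6) by (simp add: t_def)
  have "(t - 1) *\<^sub>R x \<in> C" using cc_scale[OF assms(2,3)] t1 by simp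
  then have "(t - 1) *\<^sub>R x + (x + e *\<^sub>R d) \<in> C" using cc_add[OF assms(1,2)] assms(4) by blast
  then have "(1/t) *\<^sub>R ((t - 1) *\<^sub>R x + (x + e *\<^sub>R d)) \<in> C" using cc_scale[OF assms(2)] t1 by simp
  moreover have "(1/t) *\<^sub>R ((t - 1) *\<^sub>R x + (x + e *\<^sub>R d)) = x + e' *\<^sub>R d"
    using t1 assms(5) by (simp add: t_def algebra_simps scaleR_add_right)
  ultimately show ?thesis by simp
qed

lemma pre_convex_cone:
  assumes "convex C" "cone C" "x \<in> C"
  shows "convex (pre x C) \<and> cone (pre x C)"
  unfolding convex_cone
proof (intro conjI ballI allI impI)
  fix a b assume "a \<in> pre x C" "b \<in> pre x C"
  then obtain e1 e2 where e: "e1 > 0" "x + e1 *\<^sub>R a \<in> C" "e2 > 0" "x + e2 *\<^sub>R b \<in> C"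
    unfolding pre_def by auto
  define e where "e = min e1 e2"
  have ep: "0 < e" "e \<le> e1" "e \<le> e2" using e(1,3) by (auto simp: e_def)
  have ea: "x + e *\<^sub>R a \<in> C" using pre_smaller[OF assms e(2) ep(1,2)] .
  have eb: "x + e *\<^sub>R b \<in> C" using pre_smaller[OF assms e(4) ep(1,3)] .
  have s: "(x + e *\<^sub>R a) + (x + e *\<^sub>R b) \<in> C" using cc_add[OF assms(1,2) ea eb] .
  have h: "0 \<le> (1/2::real)" by simp
  have m: "(1/2) *\<^sub>R ((x + e *\<^sub>R a) + (x + e *\<^sub>R b)) \<in> C" using cc_scale[OF assms(2) s h] .
  have eq: "(1/2) *\<^sub>R ((x + e *\<^sub>R a) + (x + e *\<^sub>R b)) = x + (e/2) *\<^sub>R (a + b)"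
  proof -
    have "(x + e *\<^sub>R a) + (x + e *\<^sub>R b) = 2 *\<^sub>R x + e *\<^sub>R (a + b)"
      by (simp add: scaleR_2 scaleR_add_right)
    then show ?thesis by (simp only: scaleR_add_right scaleR_scaleR) simp
  qed
  have "x + (e/2) *\<^sub>R (a + b) \<in> C" using m unfolding eq .
  moreover have "e/2 > 0" using ep by simp
  ultimately show "a + b \<in> pre x C" unfolding pre_def by (intro CollectI exI[of _ "e/2"] conjI)
next
  fix a and c :: real assume a: "a \<in> pre x C" and c: "0 \<le> c"
  then obtain e1 where e: "e1 > 0" "x + e1 *\<^sub>R a \<in> C" unfolding pre_def by auto
  show "c *\<^sub>R a \<in> pre x C"
  proof (cases "c = 0")
    case True
    have "x + 1 *\<^sub>R (c *\<^sub>R a) \<in> C" using assms(3) True by simp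
    then show ?thesis unfolding pre_def by (intro CollectI exI[of _ 1] conjI) simp_all
  next
    case False
    then have eq: "x + (e1 / c) *\<^sub>R (c *\<^sub>R a) = x + e1 *\<^sub>R a" by simp
    have "x + (e1 / c) *\<^sub>R (c *\<^sub>R a) \<in> C" unfolding eq by (rule e(2))
    moreover have "e1 / c > 0" using e c False by simp
    ultimately show ?thesis unfolding pre_def by (intro CollectI exI[of _ "e1/c"] conjI)
  qed
qed

lemma T_props:
  assumes "closed C" "convex C" "cone C" "x \<in> C" "C \<subseteq> span K"
  shows "closed (tangent_cone x C) \<and> convex (tangent_cone x C) \<and> cone (tangent_cone x C)
     \<and> tangent_cone x C \<subseteq> span K \<and> C \<subseteq> tangent_cone x C \<and> - x \<in> tangent_cone x C"
proof -
  have tc: "tangent_cone x C = closure (pre x C)" by (simp add: tangent_cone_def pre_def)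
  have pc: "convex (pre x C)" "cone (pre x C)" using pre_convex_cone[OF assms(2-4)] by auto
  have ps: "pre x C \<subseteq> span K"
  proof
    fix d assume "d \<in> pre x C"
    then obtain e where e: "e > 0" "x + e *\<^sub>R d \<in> C" unfolding pre_def by auto
    have "d = (1/e) *\<^sub>R ((x + e *\<^sub>R d) - x)" using e by simp
    moreover have "(1/e) *\<^sub>R ((x + e *\<^sub>R d) - x) \<in> span K"
      using e assms(4,5) by (meson span_diff span_scale subsetD)
    ultimately show "d \<in> span K" by simp
  qed
  have "C \<subseteq> pre x C"
  proof
    fix d assume "d \<in> C"
    then have "x + 1 *\<^sub>R d \<in> C" using cc_add[OF assms(2,3) assms(4)] by simp
    then show "d \<in> pre x C" unfolding pre_def by (auto intro!: exI[of _ 1])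
  qed
  moreover have "- x \<in> pre x C"
  proof -
    have "0 \<in> C" using cc_scale[OF assms(3,4), of 0] by simp
    then have "x + 1 *\<^sub>R (-x) \<in> C" by simp
    then show ?thesis unfolding pre_def by (auto intro!: exI[of _ 1])
  qed
  ultimately show ?thesis unfolding tc using pc ps closure_subset
    by (meson closed_closure closed_span closure_minimal convex_closure cone_closure subset_trans subsetD)
qed

lemma T_lin:
  assumes "closed C" "convex C" "cone C" "x \<in> lin C"
  shows "tangent_cone x C = C"
proof -
  have "pre x C \<subseteq> C"
  proof
    fix d assume "d \<in> pre x C"
    then obtain e where e: "e > 0" "x + e *\<^sub>R d \<in> C" unfolding pre_def by auto
    have "(x + e *\<^sub>R d) + (-x) \<in> C" using e assms(4) cc_add[OF assms(2,3)] unfolding lin_def by blast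
    then have ed: "e *\<^sub>R d \<in> C" by simp
    have "(1/e) *\<^sub>R (e *\<^sub>R d) \<in> C" using cc_scale[OF assms(3) ed, of "1/e"] e by simp
    then show "d \<in> C" using e by simp
  qed
  then have "tangent_cone x C \<subseteq> C" using assms(1) closure_minimal by (simp add: tangent_cone_def pre_def) blast
  moreover have "C \<subseteq> tangent_cone x C"
    using T_props[OF assms(1-3), of x C] assms(4) span_superset unfolding lin_def by blast
  ultimately show ?thesis by blast
qed

lemma T_grow:
  assumes "closed C" "convex C" "cone C" "x \<in> C" "x \<notin> lin C" "C \<subseteq> span K"
  shows "dim (lin C) < dim (lin (tangent_cone x C))"
proof -
  let ?T = "tangent_cone x C"
  have P: "closed ?T" "convex ?T" "cone ?T" "C \<subseteq> ?T" "-x \<in> ?T"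
    using T_props[OF assms(1-4,6)] by auto
  have sT: "subspace (lin ?T)" using lin_subspace[OF P(2,3) P(5)] .
  have sC: "subspace (lin C)" using lin_subspace[OF assms(2,3,4)] .
  have "insert x (lin C) \<subseteq> lin ?T" using P assms(4) unfolding lin_def by auto
  then have "span (insert x (lin C)) \<subseteq> lin ?T" using sT span_minimal by blast
  then have "dim (insert x (lin C)) \<le> dim (lin ?T)" by (metis dim_span dim_subset)
  moreover have "x \<notin> span (lin C)" using sC assms(5) by (metis span_eq_iff)
  ultimately show ?thesis by (simp add: dim_insert)
qed

lemma tf_Union: "tangent_family (\<Union>A) = \<Union>(tangent_family ` A)"
  unfolding tangent_family_def by blast

lemma iter_Suc': "tangent_iter (Suc n) F = tangent_iter n (tangent_family F)"
  by (simp only: tangent_iter_def funpow_Suc_right comp_apply)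

lemma iter_Union: "tangent_iter n (\<Union>A) = \<Union>(tangent_iter n ` A)"
proof (induction n arbitrary: A)
  case 0 then show ?case by (simp add: tangent_iter_def)
next
  case (Suc n)
  have "tangent_iter (Suc n) (\<Union>A) = tangent_iter n (tangent_family (\<Union>A))"
    by (simp only: tangent_iter_def funpow_Suc_right comp_apply)
  also have "\<dots> = \<Union>(tangent_iter n ` tangent_family ` A)" by (simp add: tf_Union Suc image_image)
  also have "\<dots> = \<Union>(tangent_iter (Suc n) ` A)"
    by (simp add: iter_Suc' image_image)
  finally show ?case .
qed

lemma iter_Suc: "tangent_iter (Suc n) {C} = (\<Union>x\<in>C. tangent_iter n {tangent_cone x C})"
proof -
  have "tangent_family {C} = \<Union>((\<lambda>x. {tangent_cone x C}) ` C)"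
    unfolding tangent_family_def by blast
  then have "tangent_iter (Suc n) {C} = tangent_iter n (\<Union>((\<lambda>x. {tangent_cone x C}) ` C))"
    by (simp only: tangent_iter_def funpow_Suc_right comp_apply)
  also have "\<dots> = (\<Union>x\<in>C. tangent_iter n {tangent_cone x C})" by (simp add: iter_Union image_image)
  finally show ?thesis .
qed

lemma main:
  assumes "closed C" "convex C" "cone C" "C \<subseteq> span K" "dim K \<le> dim (lin C) + n"
    "D \<in> tangent_iter (Suc n) {C}"
  shows "D \<in> tangent_iter n {C}"
  using assms
proof (induction n arbitrary: C D)
  case (0 C D)
  obtain x where x: "x \<in> C" "D \<in> tangent_iter 0 {tangent_cone x C}" using 0(6) unfolding iter_Suc by blast
  show ?case
  proof (cases "x \<in> lin C")
    case True
    have "tangent_cone x C = C" using T_lin[OF 0(1-3) True] .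
    then show ?thesis using x(2) by simp
  next
    case False
    have "dim (lin C) < dim (lin (tangent_cone x C))" using T_grow[OF 0(1-3) x(1) False 0(4)] .
    moreover have "lin (tangent_cone x C) \<subseteq> span K"
      using T_props[OF 0(1-3) x(1) 0(4)] unfolding lin_def by blast
    then have "dim (lin (tangent_cone x C)) \<le> dim (span K)" by (rule dim_subset)
    then have "dim (lin (tangent_cone x C)) \<le> dim K" by simp
    ultimately show ?thesis using 0(5) by linarith
  qed
next
  case (Suc m C D)
  obtain x where x: "x \<in> C" "D \<in> tangent_iter (Suc m) {tangent_cone x C}" using Suc(7) unfolding iter_Suc by blast
  show ?case
  proof (cases "x \<in> lin C")
    case True
    have "tangent_cone x C = C" using T_lin[OF Suc(2-4) True] .
    then show ?thesis using x(2) by simp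
  next
    case False
    let ?T = "tangent_cone x C"
    have g: "dim (lin C) < dim (lin ?T)" using T_grow[OF Suc(2-4) x(1) False Suc(5)] .
    have P: "closed ?T" "convex ?T" "cone ?T" "?T \<subseteq> span K"
      using T_props[OF Suc(2-4) x(1) Suc(5)] by auto
    have b: "dim K \<le> dim (lin ?T) + m" using g Suc(6) by linarith
    have "D \<in> tangent_iter m {?T}" using Suc.IH[OF P b x(2)] .
    then show ?thesis using x(1) unfolding iter_Suc by blast
  qed
qed

lemma mono_step:
  assumes "closed C" "convex C" "cone C" "C \<noteq> {}"
  shows "tangent_iter n {C} \<subseteq> tangent_iter (Suc n) {C}"
proof -
  obtain y where "y \<in> C" using assms(4) by blast
  then have z: "0 \<in> C" using cc_scale[OF assms(3), of y 0] by simp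
  then have "0 \<in> lin C" by (simp add: lin_def)
  then have "tangent_cone 0 C = C" using T_lin[OF assms(1-3)] by blast
  then have "tangent_iter n {C} = tangent_iter n {tangent_cone 0 C}" by simp
  also have "\<dots> \<subseteq> (\<Union>x\<in>C. tangent_iter n {tangent_cone x C})" using z by blast
  finally show ?thesis unfolding iter_Suc .
qed

theorem theorem3p2:
  fixes K :: "'a::euclidean_space set"
  assumes "closed K" and "convex K" and "cone K" and "K \<noteq> {}"
  shows "tangential_depth K \<le> dim K"
proof -
  have "tangent_iter (Suc (dim K)) {K} = tangent_iter (dim K) {K}"
  proof
    show "tangent_iter (Suc (dim K)) {K} \<subseteq> tangent_iter (dim K) {K}"
      using main[OF assms(1-3) span_superset le_add2] by blast
    show "tangent_iter (dim K) {K} \<subseteq> tangent_iter (Suc (dim K)) {K}"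
      using mono_step[OF assms] .
  qed
  then show ?thesis unfolding tangential_depth_def by (rule Least_le)
qed

end
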